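(* Let $\mathcal C\subseteq\mathbb F_q^n$ be a linear code of dimension $k$ with parity check matrix $H$, and let $\prec$ be an admissible order on $[X]$. Run Algorithm P (described in the context) on $H$. Then the algorithm terminates, and its output $(N,\phi)$ satisfies: $N$ is a set of canonical forms for $\mathcal C$ (properties (C1)–(C4) below), and $\phi$ is defined on all of $N\times X$, takes values in $N$, and satisfies $\xi(\phi(w,x))=\xi(wx)$ for all $w\in N$, $x\in X$.
   Context: Let $p$ be a prime, $q=p^m$, and fix $\alpha\in\mathbb F_q$ a root of an irreducible polynomial of degree $m$ over $\mathbb F_p$, so each element of $\mathbb F_q$ is uniquely $a_0+a_1\alpha+\dots+a_{m-1}\alpha^{m-1}$ with $a_i\in\mathbb F_p$. A linear code $\mathcal C\subseteq\mathbb F_q^n$ of dimension $k$ has a parity check matrix $H$, an $n\times(n-k)$ matrix over $\mathbb F_q$ with $\mathcal C=\{c: cH=0\}$ (vectors are rows). Let $[X]$ be the free commutative monoid on the $nm$ variables $X=\{x_{ij}:1\le i\le n,1\le j\le m\}$ (also written $x_k$, $k=(i-1)m+j$). Let $\psi:[X]\to(\mathbb F_q^n,+)$ be the monoid morphism with $\psi(x_{ij})=\alpha^{j-1}e_i$ ($e_i$ the $i$-th unit vector), i.e. $\psi(\prod x_{ij}^{\beta_{ij}})$ has $i$-th coordinate $\sum_j\beta_{ij}\alpha^{j-1}$ computed in $\mathbb F_q$. Put $\xi(w)=\psi(w)H$ (the syndrome of $w$). For $w\in[X]$ let $\mathrm{Ind}(w)=\{i:\exists j,\ x_{ij}\mid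 w\}$. Given an admissible (monomial) order $\prec$ on $[X]$, the error-vector order is: $u<_e w$ iff $|\mathrm{Ind}(u)|<|\mathrm{Ind}(w)|$, or $|\mathrm{Ind}(u)|=|\mathrm{Ind}(w)|$ and $u\prec w$; it is a total order on $[X]$. A set of canonical forms for $\mathcal C$ is a set $N\subseteq[X]$ with (C1) $1\in N$; (C2) $|N|=q^{n-k}$; (C3) distinct elements of $N$ have distinct syndromes $\xi$; (C4) every $w\in N\setminus\{1\}$ can be written $w=w'x$ with $w'\in N$, $x\in X$. Algorithm P: keep a list $L$ of words sorted increasingly by $<_e$, a set $N$ (initially $L=(1)$, $N=\emptyset$). While $L\neq\emptyset$: remove the $<_e$-smallest word $w$ from $L$. If some $w_j\in N$ has $\xi(w_j)=\xi(w)$, then for each variable $x_k$ with $w=ux_k$ and $u\in N$ set $\phi(u,x_k):=w_j$. Otherwise add $w$ to $N$, insert all products $wx$ ($x\in X$) into $L$ (keeping it sorted), and for each $x_k$ with $w=ux_k$, $u\in N$, set $\phi(u,x_k):=w$. Output $N$ and $\phi$. *)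

theory Defs
  imports "HOL-Analysis.Cartesian_Space" "HOL-Computational_Algebra.Polynomial"
    "HOL-Library.Multiset" "HOL-Library.While_Combinator"
begin

definition prime_subfield :: "'a::field set" where
  "prime_subfield = range of_nat"

definition irreducible_over :: "'a::field set \<Rightarrow> 'a poly \<Rightarrow> bool" where
  "irreducible_over S f \<longleftrightarrow>
     (\<forall>i. coeff f i \<in> S) \<and> degree f \<ge> 1 \<and>
     (\<forall>g h. (\<forall>i. coeff g i \<in> S) \<longrightarrow> (\<forall>i. coeff h i \<in> S) \<longrightarrow> f = g * h \<longrightarrow>
        degree g = 0 \<or> degree h = 0)"

text \<open>Variable x_ij (i-th coordinate, j = 1..m) is the pair (i, j-1); a monomial
  (element of the free commutative monoid [X]) is a finite multiset of variables.\<close>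

definition vars :: "nat \<Rightarrow> ('n \<times> nat) set" where
  "vars m = UNIV \<times> {..<m}"

definition monomials :: "nat \<Rightarrow> ('n \<times> nat) multiset set" where
  "monomials m = {w. set_mset w \<subseteq> vars m}"

definition Ind :: "('n \<times> nat) multiset \<Rightarrow> 'n set" where
  "Ind w = fst ` set_mset w"

definition psi :: "nat \<Rightarrow> 'a::field \<Rightarrow> ('n::finite \<times> nat) multiset \<Rightarrow> 'a ^ 'n" where
  "psi m \<alpha> w = (\<chi> i. \<Sum>j<m. of_nat (count w (i, j)) * \<alpha> ^ j)"

definition xi :: "nat \<Rightarrow> 'a::field \<Rightarrow> 'a ^ 'r ^ 'n \<Rightarrow> ('n::finite \<times> nat) multiset \<Rightarrow> 'a ^ 'r" where
  "xi m \<alpha> H w = psi m \<alpha> w v* H"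

definition admissible_order ::
  "nat \<Rightarrow> (('n \<times> nat) multiset \<Rightarrow> ('n \<times> nat) multiset \<Rightarrow> bool) \<Rightarrow> bool" where
  "admissible_order m ord \<longleftrightarrow>
     (\<forall>u\<in>monomials m. \<not> ord u u) \<and>
     (\<forall>u\<in>monomials m. \<forall>v\<in>monomials m. \<forall>w\<in>monomials m. ord u v \<longrightarrow> ord v w \<longrightarrow> ord u w) \<and>
     (\<forall>u\<in>monomials m. \<forall>w\<in>monomials m. u \<noteq> w \<longrightarrow> ord u w \<or> ord w u) \<and>
     (\<forall>u\<in>monomials m. u \<noteq> {#} \<longrightarrow> ord {#} u) \<and>
     (\<forall>u\<in>monomials m. \<forall>w\<in>monomials m. \<forall>v\<in>monomials m. ord u w \<longrightarrow> ord (u + v) (w + v))"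

definition err_less ::
  "(('n \<times> nat) multiset \<Rightarrow> ('n \<times> nat) multiset \<Rightarrow> bool) \<Rightarrow>
   ('n \<times> nat) multiset \<Rightarrow> ('n \<times> nat) multiset \<Rightarrow> bool" where
  "err_less ord u w \<longleftrightarrow>
     card (Ind u) < card (Ind w) \<or> (card (Ind u) = card (Ind w) \<and> ord u w)"

definition canonical_forms ::
  "nat \<Rightarrow> 'a::{finite,field} \<Rightarrow> 'a ^ 'r ^ 'n \<Rightarrow> ('n::finite \<times> nat) multiset set \<Rightarrow> bool" where
  "canonical_forms m \<alpha> H N \<longleftrightarrow>
     N \<subseteq> monomials m \<and>
     {#} \<in> N \<and>
     card N = CARD('a) ^ CARD('r) \<and>
     inj_on (xi m \<alpha> H) N \<and>
     (\<forall>w\<in>N. w \<noteq> {#} \<longrightarrow> (\<exists>w'\<in>N. \<exists>x\<in>vars m. w = add_mset x w'))"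

fun ins_sorted :: "('b \<Rightarrow> 'b \<Rightarrow> bool) \<Rightarrow> 'b \<Rightarrow> 'b list \<Rightarrow> 'b list" where
  "ins_sorted lt x [] = [x]"
| "ins_sorted lt x (y # ys) =
     (if x = y \<or> lt x y then x # y # ys else y # ins_sorted lt x ys)"

type_synonym ('n, 'a) algP_state =
  "('n \<times> nat) multiset list \<times> ('n \<times> nat) multiset set \<times>
   (('n \<times> nat) multiset \<times> ('n \<times> nat) \<Rightarrow> ('n \<times> nat) multiset option)"

definition phi_upd ::
  "(('n \<times> nat) multiset \<times> ('n \<times> nat) \<Rightarrow> ('n \<times> nat) multiset option) \<Rightarrow>
   ('n \<times> nat) multiset set \<Rightarrow> ('n \<times> nat) multiset \<Rightarrow> ('n \<times> nat) multiset \<Rightarrow>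
   (('n \<times> nat) multiset \<times> ('n \<times> nat) \<Rightarrow> ('n \<times> nat) multiset option)" where
  "phi_upd \<phi> N w t =
     (\<lambda>(u, x). if x \<in># w \<and> u = w - {#x#} \<and> u \<in> N then Some t else \<phi> (u, x))"

text \<open>A fixed enumeration of the variables (the result does not depend on it).\<close>
definition var_list :: "nat \<Rightarrow> ('n::finite \<times> nat) list" where
  "var_list m = (SOME xs. distinct xs \<and> set xs = vars m)"

definition algP_step ::
  "nat \<Rightarrow> 'a::field \<Rightarrow> 'a ^ 'r ^ 'n \<Rightarrow>
   (('n::finite \<times> nat) multiset \<Rightarrow> ('n \<times> nat) multiset \<Rightarrow> bool) \<Rightarrow>
   ('n, 'a) algP_state \<Rightarrow> ('n, 'a) algP_state" where
  "algP_step m \<alpha> H ord s =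
     (case s of (L, N, \<phi>) \<Rightarrow>
       (case L of [] \<Rightarrow> s
        | w # L' \<Rightarrow>
          if \<exists>v\<in>N. xi m \<alpha> H v = xi m \<alpha> H w
          then (L', N, phi_upd \<phi> N w (SOME v. v \<in> N \<and> xi m \<alpha> H v = xi m \<alpha> H w))
          else (fold (\<lambda>x. ins_sorted (err_less ord) (add_mset x w)) (var_list m) L',
                insert w N, phi_upd \<phi> N w w)))"

definition algP_init :: "('n, 'a) algP_state" where
  "algP_init = ([{#}], {}, (\<lambda>_. None))"

definition algP ::
  "nat \<Rightarrow> 'a::field \<Rightarrow> 'a ^ 'r ^ 'n \<Rightarrow>
   (('n::finite \<times> nat) multiset \<Rightarrow> ('n \<times> nat) multiset \<Rightarrow> bool) \<Rightarrow>
   ('n, 'a) algP_state option" where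
  "algP m \<alpha> H ord =
     while_option (\<lambda>(L, N, \<phi>). L \<noteq> []) (algP_step m \<alpha> H ord) algP_init"

end

theory Submission
  imports Defs "HOL-Computational_Algebra.Euclidean_Algorithm" "HOL-Computational_Algebra.Primes"
begin


lemma CHAR_pos_fin: "CHAR('a::{finite,field}) > 0"
  by (rule finite_imp_CHAR_pos) simp

lemma of_nat_inj_CHAR:
  assumes "a < CHAR('a::{finite,field})" "b < CHAR('a)" "of_nat a = (of_nat b :: 'a)"
  shows "a = b"
proof -
  have *: "x = y" if "x \<le> y" "x < CHAR('a)" "y < CHAR('a)" "of_nat x = (of_nat y :: 'a)" for x y
  proof -
    have "of_nat (y - x) = (of_nat y - of_nat x :: 'a)" using that(1) by (simp add: of_nat_diff)
    then have "of_nat (y - x) = (0::'a)" using that(4) by simp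
    then have "CHAR('a) dvd (y - x)" by (simp add: of_nat_eq_0_iff_char_dvd)
    moreover have "y - x < CHAR('a)" using that by linarith
    ultimately have "y - x = 0" using dvd_imp_le by fastforce
    then show ?thesis using that(1) by simp
  qed
  show ?thesis using *[of a b] *[of b a] assms by (cases "a \<le> b") auto
qed

lemma neg_of_nat_CHAR: "- (of_nat n :: 'a::{finite,field}) = of_nat ((CHAR('a) - 1) * n)"
proof -
  have "(CHAR('a) - 1) * n + n = CHAR('a) * n" using CHAR_pos_fin[where ?'a='a]
    by (cases "CHAR('a)") auto
  then have "of_nat ((CHAR('a) - 1) * n) + of_nat n = (of_nat (CHAR('a) * n) :: 'a)"
    by (metis of_nat_add)
  then have "of_nat n + of_nat ((CHAR('a) - 1) * n) = (0::'a)" by (simp add: add.commute)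
  then show ?thesis by (subst neg_eq_iff_add_eq_0)
qed

lemma CHAR_dvd_CARD': "CHAR('a::{finite,field}) dvd CARD('a)"
proof -
  define c where "c = CHAR('a)"
  have cpos: "c > 0" using CHAR_pos_fin c_def by simp
  define Cl :: "'a \<Rightarrow> 'a set" where "Cl x = {y. \<exists>n. y = x + of_nat n}" for x
  have Cl_img: "Cl x = (\<lambda>k. x + of_nat k) ` {..<c}" for x
  proof
    show "Cl x \<subseteq> (\<lambda>k. x + of_nat k) ` {..<c}"
    proof
      fix y assume "y \<in> Cl x"
      then obtain n where n: "y = x + of_nat n" unfolding Cl_def by blast
      have "of_nat n = (of_nat (n mod c) :: 'a)"
      proof -
        have "of_nat n = (of_nat (c * (n div c) + n mod c) :: 'a)" by (simp only: mult_div_mod_eq)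
        also have "\<dots> = of_nat (n mod c)" by (simp only: of_nat_add of_nat_mult) (simp add: c_def)
        finally show ?thesis .
      qed
      then show "y \<in> (\<lambda>k. x + of_nat k) ` {..<c}" using n cpos by auto
    qed
  qed (auto simp: Cl_def)
  have card_Cl: "card (Cl x) = c" for x
  proof -
    have "inj_on (\<lambda>k. x + (of_nat k :: 'a)) {..<c}"
      by (rule inj_onI) (use of_nat_inj_CHAR c_def in auto)
    then show ?thesis by (simp add: Cl_img card_image)
  qed
  have Cl_eq: "Cl y = Cl x" if yx: "y \<in> Cl x" for x y
  proof -
    obtain n where n: "y = x + of_nat n" using yx unfolding Cl_def by blast
    have e: "(of_nat ((c - 1) * n) :: 'a) = - of_nat n"
      using neg_of_nat_CHAR[of n, where ?'a='a] unfolding c_def by (rule sym)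
    obtain r where x: "x = y + of_nat r"
    proof
      show "x = y + of_nat ((c - 1) * n)" by (simp only: e n) simp
    qed
    have sub: "Cl v \<subseteq> Cl u" if "v = u + of_nat t" for u v t
    proof
      fix z assume "z \<in> Cl v"
      then obtain k where "z = v + of_nat k" unfolding Cl_def by blast
      then have "z = u + of_nat (t + k)" using that by simp
      then show "z \<in> Cl u" unfolding Cl_def by blast
    qed
    show ?thesis using sub[OF n] sub[OF x] by blast
  qed
  have "c * card (range Cl) = card (\<Union>(range Cl))"
  proof (rule card_partition)
    show "c1 \<inter> c2 = {}" if cc: "c1 \<in> range Cl" "c2 \<in> range Cl" "c1 \<noteq> c2" for c1 c2
    proof -
      obtain a b where ab: "c1 = Cl a" "c2 = Cl b" using cc by blast
      show ?thesis
      proof (rule ccontr)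
        assume "c1 \<inter> c2 \<noteq> {}"
        then obtain z where "z \<in> Cl a" "z \<in> Cl b" using ab by blast
        then have "Cl a = Cl b" using Cl_eq by metis
        then show False using cc ab by simp
      qed
    qed
  qed (auto simp: card_Cl)
  moreover have "\<Union>(range Cl) = UNIV"
  proof -
    have "x \<in> Cl x" for x unfolding Cl_def by (rule CollectI, rule exI[of _ 0]) simp
    then show ?thesis by blast
  qed
  ultimately show ?thesis unfolding c_def by (metis dvd_triv_left)
qed

lemma char_eq:
  assumes "prime p" "CARD('a::{finite,field}) = p ^ m"
  shows "CHAR('a) = p"
proof -
  have pos: "CHAR('a) > 0" by (rule finite_imp_CHAR_pos) simp
  have pr: "prime CHAR('a)" by (rule prime_CHAR_semidom[OF pos])
  have "m > 0"
  proof (rule ccontr)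
    assume "\<not> m > 0"
    then have "CARD('a) = 1" using assms by simp
    then obtain z where "UNIV = {z::'a}" using card_1_singletonE by blast
    then have "(0::'a) = 1" by (metis UNIV_I singletonD)
    then show False by simp
  qed
  have "CHAR('a) dvd p ^ m" using CHAR_dvd_CARD'[where ?'a='a] assms(2) by simp
  then have "CHAR('a) dvd p" using prime_dvd_power_iff[OF pr \<open>m > 0\<close>] by simp
  then show ?thesis using primes_dvd_imp_eq[OF pr assms(1)] by simp
qed

lemma PS_of_nat [simp]: "of_nat n \<in> prime_subfield"
  by (simp add: prime_subfield_def)

lemma PS_0 [simp]: "0 \<in> prime_subfield"
  by (metis PS_of_nat of_nat_0)

lemma PS_1 [simp]: "1 \<in> prime_subfield"
  by (metis PS_of_nat of_nat_1)

lemma PS_add: "a \<in> prime_subfield \<Longrightarrow> b \<in> prime_subfield \<Longrightarrow> a + b \<in> prime_subfield"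
proof -
  assume "a \<in> prime_subfield" "b \<in> prime_subfield"
  then obtain x y where "a = of_nat x" "b = of_nat y" unfolding prime_subfield_def by blast
  then have "a + b = of_nat (x + y)" by simp
  then show ?thesis by (simp only: PS_of_nat)
qed

lemma PS_mult: "a \<in> prime_subfield \<Longrightarrow> b \<in> prime_subfield \<Longrightarrow> a * b \<in> prime_subfield"
proof -
  assume "a \<in> prime_subfield" "b \<in> prime_subfield"
  then obtain x y where "a = of_nat x" "b = of_nat y" unfolding prime_subfield_def by blast
  then have "a * b = of_nat (x * y)" by simp
  then show ?thesis by (simp only: PS_of_nat)
qed

lemma PS_uminus:
  fixes a :: "'a::{finite,field}"
  assumes "a \<in> prime_subfield"
  shows "- a \<in> prime_subfield"
proof -
  obtain x where "a = of_nat x" using assms unfolding prime_subfield_def by blast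
  then have "- a = of_nat ((CHAR('a) - 1) * x)" using neg_of_nat_CHAR[of x, where ?'a='a] by simp
  then show ?thesis by (metis PS_of_nat)
qed

lemma PS_minus:
  fixes a b :: "'a::{finite,field}"
  assumes "a \<in> prime_subfield" "b \<in> prime_subfield"
  shows "a - b \<in> prime_subfield"
  using PS_add[OF assms(1) PS_uminus[OF assms(2)]] by simp

lemma PS_inverse:
  fixes a :: "'a::{finite,field}"
  assumes "a \<in> prime_subfield"
  shows "inverse a \<in> prime_subfield"
proof (cases "a = 0")
  case True then show ?thesis by simp
next
  case False
  have "finite (prime_subfield :: 'a set)" by simp
  moreover have "(\<lambda>y. a * y) ` prime_subfield \<subseteq> prime_subfield" using assms PS_mult by blast
  moreover have "inj_on (\<lambda>y. a * y) prime_subfield" using False by (auto intro: inj_onI)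
  ultimately have "(\<lambda>y. a * y) ` prime_subfield = prime_subfield" by (rule endo_inj_surj)
  then obtain y where y: "y \<in> prime_subfield" "a * y = 1" using PS_1 by (metis imageE)
  then have "inverse a = y" by (metis inverse_unique)
  then show ?thesis using y by simp
qed

lemma PS_divide:
  fixes a b :: "'a::{finite,field}"
  shows "a \<in> prime_subfield \<Longrightarrow> b \<in> prime_subfield \<Longrightarrow> a / b \<in> prime_subfield"
  by (simp add: divide_inverse PS_mult PS_inverse)

lemma poly_div_PS:
  fixes f g :: "'a::{finite,field} poly"
  assumes g: "\<forall>i. coeff g i \<in> prime_subfield" "g \<noteq> 0"
  shows "(\<forall>i. coeff f i \<in> prime_subfield) \<Longrightarrow> \<exists>q r. (\<forall>i. coeff q i \<in> prime_subfield) \<and>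
           (\<forall>i. coeff r i \<in> prime_subfield) \<and> f = g * q + r \<and> (r = 0 \<or> degree r < degree g)"
proof (induction "degree f" arbitrary: f rule: less_induct)
  case less
  show ?case
  proof (cases "f = 0 \<or> degree f < degree g")
    case True
    then show ?thesis by (intro exI[of _ 0] exI[of _ f] conjI) (use less.prems in auto)
  next
    case False
    then have f0: "f \<noteq> 0" and dge: "degree g \<le> degree f" by auto
    define c where "c = lead_coeff f / lead_coeff g"
    define d where "d = degree f - degree g"
    define f' where "f' = f - monom c d * g"
    have cS: "c \<in> prime_subfield" unfolding c_def using less.prems g by (simp add: PS_divide)
    have cf'S: "\<forall>i. coeff f' i \<in> prime_subfield"
      using less.prems g cS by (auto simp: f'_def coeff_monom_mult intro!: PS_minus PS_mult)
    have lg: "lead_coeff g \<noteq> 0" using g by simp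
    have "coeff f' (degree f) = 0"
      using dge lg by (simp add: f'_def coeff_monom_mult c_def d_def)
    have dm: "degree (monom c d * g) \<le> degree f"
      by (metis add_diff_inverse_nat d_def degree_monom_le degree_mult_le dge le_trans
          add.commute add_le_mono1 not_le)
    then have df': "degree f' \<le> degree f" unfolding f'_def by (meson degree_diff_le le_refl)
    show ?thesis
    proof (cases "f' = 0")
      case True
      then have "f = g * monom c d" by (simp add: f'_def mult.commute)
      then show ?thesis using cS by (intro exI[of _ "monom c d"] exI[of _ 0]) (auto simp: coeff_monom)
    next
      case False
      have "degree f' \<noteq> degree f"
      proof
        assume "degree f' = degree f"
        then have "lead_coeff f' = 0" using \<open>coeff f' (degree f) = 0\<close> by simp
        then show False using False by simp
      qed
      then have "degree f' < degree f" using df' by simp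
      from less.hyps[OF this cf'S] obtain q r where qr: "\<forall>i. coeff q i \<in> prime_subfield"
        "\<forall>i. coeff r i \<in> prime_subfield" "f' = g * q + r" "r = 0 \<or> degree r < degree g" by blast
      have "f = g * (q + monom c d) + r" using qr(3) by (simp add: f'_def algebra_simps)
      moreover have "\<forall>i. coeff (q + monom c d) i \<in> prime_subfield"
        using qr(1) cS by (auto simp: coeff_monom intro: PS_add)
      ultimately show ?thesis using qr by blast
    qed
  qed
qed


lemma min_deg:
  fixes \<alpha> :: "'a::{finite,field}"
  assumes f: "irreducible_over prime_subfield f" "degree f = m" "poly f \<alpha> = 0"
    and h: "h \<noteq> 0" "\<forall>i. coeff h i \<in> prime_subfield" "poly h \<alpha> = 0"
  shows "m \<le> degree h"
proof -
  define P where "P = (\<lambda>h. h \<noteq> 0 \<and> (\<forall>i. coeff h i \<in> prime_subfield) \<and> poly h \<alpha> = 0)"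
  have "P h" using h P_def by simp
  then obtain g where g: "P g" and gmin: "\<forall>h'. P h' \<longrightarrow> degree g \<le> degree h'"
    using ex_has_least_nat[of P h degree] by blast
  have fS: "\<forall>i. coeff f i \<in> prime_subfield" and fdeg: "degree f \<ge> 1"
    and irr: "\<forall>g h. (\<forall>i. coeff g i \<in> prime_subfield) \<longrightarrow> (\<forall>i. coeff h i \<in> prime_subfield) \<longrightarrow>
        f = g * h \<longrightarrow> degree g = 0 \<or> degree h = 0"
    using f(1) unfolding irreducible_over_def by auto
  obtain q r where qr: "\<forall>i. coeff q i \<in> prime_subfield" "\<forall>i. coeff r i \<in> prime_subfield"
    "f = g * q + r" "r = 0 \<or> degree r < degree g"
    using poly_div_PS[of g f] g fS unfolding P_def by blast
  have "poly r \<alpha> = 0" using qr(3) f(3) g unfolding P_def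
    by (metis add_0 mult_zero_left poly_add poly_mult)
  then have r0: "r = 0" using qr(2,4) gmin unfolding P_def by (meson not_le)
  then have fgq: "f = g * q" using qr(3) by simp
  have gS: "\<forall>i. coeff g i \<in> prime_subfield" using g unfolding P_def by simp
  have "degree g = 0 \<or> degree q = 0"
    by (rule irr[rule_format, OF gS[rule_format] qr(1)[rule_format] fgq])
  moreover have "degree g \<noteq> 0"
  proof
    assume "degree g = 0"
    then have "g = [:coeff g 0:]" using degree_0_id by metis
    then have "poly g \<alpha> = coeff g 0" by (metis poly_pCons mult_zero_right poly_0 add_0_right)
    moreover have "coeff g 0 \<noteq> 0" using \<open>g = [:coeff g 0:]\<close> g unfolding P_def by (metis pCons_0_0)
    ultimately show False using g unfolding P_def by simp
  qed
  ultimately have "degree q = 0" by simp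
  moreover have "f \<noteq> 0" using fdeg by auto
  then have "q \<noteq> 0" "g \<noteq> 0" using fgq by auto
  ultimately have "degree f = degree g" using fgq degree_mult_eq[of g q] by simp
  then show ?thesis using gmin \<open>P h\<close> f(2) by simp
qed

lemma coeff_sum_monom_lt:
  "coeff (\<Sum>j<m. monom (a j) j) i = (if i < m then a i else 0)"
  by (simp add: coeff_sum coeff_monom)

lemma span_alpha:
  fixes \<alpha> :: "'a::{finite,field}"
  assumes "prime p" "CARD('a) = p ^ m"
    and f: "irreducible_over prime_subfield f" "degree f = m" "poly f \<alpha> = 0"
  shows "\<exists>c. a = (\<Sum>j<m. of_nat (c j) * \<alpha> ^ j)"
proof -
  have cp: "CHAR('a) = p" by (rule char_eq[OF assms(1,2)])
  have m1: "m \<ge> 1" using f(1,2) unfolding irreducible_over_def by auto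
  define E where "E = (\<lambda>c. (\<Sum>j<m. of_nat (c j) * \<alpha> ^ j :: 'a))"
  define A where "A = PiE {..<m} (\<lambda>_. {..<p})"
  have inj: "inj_on E A"
  proof (rule inj_onI)
    fix c c' assume cA: "c \<in> A" "c' \<in> A" and eq: "E c = E c'"
    define h where "h = (\<Sum>j<m. monom (of_nat (c j) - of_nat (c' j) :: 'a) j)"
    have ph: "poly h \<alpha> = E c - E c'"
      by (simp add: h_def E_def poly_sum poly_monom sum_subtractf algebra_simps)
    have ch: "coeff h i = (if i < m then of_nat (c i) - of_nat (c' i) else 0)" for i
      unfolding h_def by (rule coeff_sum_monom_lt)
    have hS: "\<forall>i. coeff h i \<in> prime_subfield" by (simp add: ch PS_minus)
    have "h = 0"
    proof (rule ccontr)
      assume h0: "h \<noteq> 0"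
      have "degree h \<le> m - 1" by (rule degree_le) (use m1 in \<open>auto simp: ch\<close>)
      moreover have "m \<le> degree h" by (rule min_deg[OF f h0 hS]) (simp add: ph eq)
      ultimately show False using m1 by simp
    qed
    then have "of_nat (c i) = (of_nat (c' i) :: 'a)" if "i < m" for i
      using ch[of i] that by simp
    then have "c i = c' i" if "i < m" for i
      using that cA of_nat_inj_CHAR[of "c i" "c' i", where ?'a='a] cp unfolding A_def by auto
    then show "c = c'" using cA unfolding A_def by (intro PiE_ext) auto
  qed
  have "card (E ` A) = p ^ m" using inj card_image card_PiE A_def by (simp add: card_image card_PiE)
  then have "E ` A = UNIV" using assms(2) by (intro card_subset_eq) auto
  then have "a \<in> E ` A" by simp
  then obtain c where "a = E c" by blast
  then show ?thesis unfolding E_def by blast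
qed

lemma psi_surj:
  fixes \<alpha> :: "'a::field"
  assumes "\<And>a::'a. \<exists>c. a = (\<Sum>j<m. of_nat (c j) * \<alpha> ^ j)"
  shows "\<exists>w \<in> monomials m. psi m \<alpha> w = (v :: 'a ^ 'n::finite)"
proof -
  have "\<forall>i. \<exists>c. v $ i = (\<Sum>j<m. of_nat (c j) * \<alpha> ^ j)" using assms by blast
  then obtain cf where cf0: "\<forall>i. v $ i = (\<Sum>j<m. of_nat (cf i j) * \<alpha> ^ j)"
    using choice[of "\<lambda>i c. v $ i = (\<Sum>j<m. of_nat (c j) * \<alpha> ^ j)"] by blast
  then have cf: "v $ i = (\<Sum>j<m. of_nat (cf i j) * \<alpha> ^ j)" for i by blast
  define w where "w = (\<Sum>i\<in>(UNIV::'n set). \<Sum>j<m. replicate_mset (cf i j) (i, j))"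
  have cw: "count w (a, b) = (if b < m then cf a b else 0)" for a b
  proof -
    have "count w (a, b) = (\<Sum>i\<in>UNIV. \<Sum>j<m. if i = a \<and> j = b then cf i j else 0)"
      unfolding w_def count_sum count_replicate_mset
      by (intro sum.cong refl) auto
    also have "\<dots> = (\<Sum>i\<in>UNIV. if i = a then (\<Sum>j<m. if j = b then cf i j else 0) else 0)"
      by (intro sum.cong refl) auto
    also have "\<dots> = (\<Sum>j<m. if j = b then cf a j else 0)"
      by (simp add: sum.delta')
    also have "\<dots> = (if b < m then cf a b else 0)"
      by (simp add: sum.delta')
    finally show ?thesis .
  qed
  have "w \<in> monomials m"
  proof -
    have "set_mset w \<subseteq> vars m"
    proof
      fix x assume "x \<in># w"
      then have "count w x > 0" by simp
      obtain a b where ab: "x = (a, b)" by (cases x)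
      have "b < m"
      proof (rule ccontr)
        assume "\<not> b < m"
        then have "count w x = 0" using cw[of a b] ab by simp
        then show False using \<open>count w x > 0\<close> by simp
      qed
      then show "x \<in> vars m" using ab by (simp add: vars_def)
    qed
    then show ?thesis by (simp add: monomials_def)
  qed
  moreover have "psi m \<alpha> w = v"
    by (simp add: psi_def vec_eq_iff cw cf)
  ultimately show ?thesis by blast
qed



lemma ins_sorted_set [simp]: "set (ins_sorted lt x L) = insert x (set L)"
  by (induction L) auto

lemma ins_sorted_length [simp]: "length (ins_sorted lt x L) = Suc (length L)"
  by (induction L) auto

lemma fold_ins_set:
  "set (fold (\<lambda>x. ins_sorted lt (g x)) xs L) = set L \<union> g ` set xs"
  by (induction xs arbitrary: L) auto

lemma fold_ins_length:
  "length (fold (\<lambda>x. ins_sorted lt (g x)) xs L) = length L + length xs"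
  by (induction xs arbitrary: L) auto

lemma finite_vars [simp]: "finite (vars m :: ('n::finite \<times> nat) set)"
  by (simp add: vars_def)

lemma var_list_props: "distinct (var_list m :: ('n::finite \<times> nat) list) \<and> set (var_list m) = (vars m :: ('n::finite \<times> nat) set)"
proof -
  obtain xs where "set xs = (vars m :: ('n \<times> nat) set)" "distinct xs"
    using finite_distinct_list[OF finite_vars] by blast
  then have "\<exists>xs. distinct xs \<and> set xs = (vars m :: ('n \<times> nat) set)" by blast
  from someI_ex[OF this] show ?thesis unfolding var_list_def .
qed

lemma length_var_list: "length (var_list m :: ('n::finite \<times> nat) list) = card (vars m :: ('n \<times> nat) set)"
  using var_list_props[of m, where ?'n='n] distinct_card by metis

lemma psi_add: "psi m \<alpha> (u + w) = psi m \<alpha> u + psi m \<alpha> w"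
  by (simp add: psi_def vec_eq_iff sum.distrib distrib_right)

lemma psi_empty: "psi m \<alpha> {#} = 0"
  by (simp add: psi_def vec_eq_iff)

lemma xi_add: "xi m \<alpha> H (u + w) = xi m \<alpha> H u + xi m \<alpha> H w"
  by (simp add: xi_def psi_add vector_matrix_left_distrib)

lemma xi_empty: "xi m \<alpha> H {#} = 0"
  by (simp add: xi_def psi_empty)

lemma xi_add_mset: "xi m \<alpha> H (add_mset x w) = xi m \<alpha> H w + xi m \<alpha> H {#x#}"
  by (metis add_mset_add_single xi_add)

definition algP_inv ::
  "nat \<Rightarrow> 'a::field \<Rightarrow> 'a ^ 'r ^ 'n \<Rightarrow> ('n::finite, 'a) algP_state \<Rightarrow> bool" where
  "algP_inv m \<alpha> H s \<longleftrightarrow> (case s of (L, N, \<phi>) \<Rightarrow>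
     set L \<subseteq> monomials m \<and> N \<subseteq> monomials m \<and> inj_on (xi m \<alpha> H) N \<and>
     ((N = {} \<and> L = [{#}]) \<or> {#} \<in> N) \<and>
     (\<forall>w\<in>N. w \<noteq> {#} \<longrightarrow> (\<exists>w'\<in>N. \<exists>x\<in>vars m. w = add_mset x w')) \<and>
     (\<forall>w\<in>set L. w = {#} \<or> (\<exists>w'\<in>N. \<exists>x\<in>vars m. w = add_mset x w')) \<and>
     (\<forall>u x v. \<phi> (u, x) = Some v \<longrightarrow> v \<in> N \<and> xi m \<alpha> H v = xi m \<alpha> H (add_mset x u)) \<and>
     (\<forall>w\<in>N. \<forall>x\<in>vars m. add_mset x w \<in> set L \<or> \<phi> (w, x) \<noteq> None))"

lemma algP_inv_init: "algP_inv m \<alpha> H algP_init"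
  by (simp add: algP_inv_def algP_init_def monomials_def)

lemma phi_upd_cases:
  "phi_upd \<phi> N w t (u, x) = Some v \<Longrightarrow>
     (x \<in># w \<and> u = w - {#x#} \<and> u \<in> N \<and> v = t) \<or> \<phi> (u, x) = Some v"
  by (auto simp: phi_upd_def split: if_splits)

lemma phi_upd_hit:
  "add_mset x u = w \<Longrightarrow> u \<in> N \<Longrightarrow> phi_upd \<phi> N w t (u, x) = Some t"
  by (auto simp: phi_upd_def)

lemma phi_upd_keep:
  "\<phi> (u, x) \<noteq> None \<Longrightarrow> phi_upd \<phi> N w t (u, x) \<noteq> None"
  by (auto simp: phi_upd_def)

lemma step_inv:
  fixes H :: "'a::field ^ 'r ^ 'n::finite"
  assumes inv: "algP_inv m \<alpha> H (L, N, \<phi>)" and L: "L = w # L'"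
  shows "algP_inv m \<alpha> H (algP_step m \<alpha> H ord (L, N, \<phi>))"
proof -
  let ?xi = "xi m \<alpha> H"
  have I1: "set L \<subseteq> monomials m" and I2: "N \<subseteq> monomials m" and I3: "inj_on ?xi N"
    and I4: "(N = {} \<and> L = [{#}]) \<or> {#} \<in> N"
    and I5: "\<forall>w\<in>N. w \<noteq> {#} \<longrightarrow> (\<exists>w'\<in>N. \<exists>x\<in>vars m. w = add_mset x w')"
    and I6: "\<forall>w\<in>set L. w = {#} \<or> (\<exists>w'\<in>N. \<exists>x\<in>vars m. w = add_mset x w')"
    and I7: "\<forall>u x v. \<phi> (u, x) = Some v \<longrightarrow> v \<in> N \<and> ?xi v = ?xi (add_mset x u)"
    and I8: "\<forall>w\<in>N. \<forall>x\<in>vars m. add_mset x w \<in> set L \<or> \<phi> (w, x) \<noteq> None"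
    using inv unfolding algP_inv_def by auto
  have xiw: "?xi (add_mset x (w - {#x#})) = ?xi w" if "x \<in># w" for x
    using that by (simp add: insert_DiffM)
  show ?thesis
  proof (cases "\<exists>v\<in>N. ?xi v = ?xi w")
    case True
    define t where "t = (SOME v. v \<in> N \<and> ?xi v = ?xi w)"
    have t: "t \<in> N" "?xi t = ?xi w" using someI_ex[of "\<lambda>v. v \<in> N \<and> ?xi v = ?xi w"] True
      unfolding t_def by blast+
    have step: "algP_step m \<alpha> H ord (L, N, \<phi>) = (L', N, phi_upd \<phi> N w t)"
      using True by (simp add: algP_step_def L t_def)
    show ?thesis unfolding step algP_inv_def prod.case
    proof (intro conjI)
      show "set L' \<subseteq> monomials m" using I1 L by auto
      show "N \<subseteq> monomials m" by (rule I2)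
      show "inj_on ?xi N" by (rule I3)
      show "(N = {} \<and> L' = [{#}]) \<or> {#} \<in> N" using I4 t by auto
      show "\<forall>w\<in>N. w \<noteq> {#} \<longrightarrow> (\<exists>w'\<in>N. \<exists>x\<in>vars m. w = add_mset x w')" by (rule I5)
      show "\<forall>w\<in>set L'. w = {#} \<or> (\<exists>w'\<in>N. \<exists>x\<in>vars m. w = add_mset x w')" using I6 L by auto
      show "\<forall>u x v. phi_upd \<phi> N w t (u, x) = Some v \<longrightarrow> v \<in> N \<and> ?xi v = ?xi (add_mset x u)"
      proof (intro allI impI)
        fix u x v assume "phi_upd \<phi> N w t (u, x) = Some v"
        then have "(x \<in># w \<and> u = w - {#x#} \<and> u \<in> N \<and> v = t) \<or> \<phi> (u, x) = Some v"
          by (rule phi_upd_cases)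
        then show "v \<in> N \<and> ?xi v = ?xi (add_mset x u)"
        proof (elim disjE)
          assume "x \<in># w \<and> u = w - {#x#} \<and> u \<in> N \<and> v = t"
          then show ?thesis using t xiw by auto
        next
          assume "\<phi> (u, x) = Some v"
          then have "v \<in> N \<and> ?xi v = ?xi (add_mset x u)" using I7 by blast
          then show ?thesis by auto
        qed
      qed
      show "\<forall>u\<in>N. \<forall>x\<in>vars m. add_mset x u \<in> set L' \<or> phi_upd \<phi> N w t (u, x) \<noteq> None"
      proof (intro ballI)
        fix u and x :: "'n \<times> nat" assume u: "u \<in> N" and x: "x \<in> vars m"
        show "add_mset x u \<in> set L' \<or> phi_upd \<phi> N w t (u, x) \<noteq> None"
        proof (cases "add_mset x u = w")
          case True
          then show ?thesis using phi_upd_hit[OF True u] by simp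
        next
          case False
          have "add_mset x u \<in> set L \<or> \<phi> (u, x) \<noteq> None" using I8 u x by blast
          then have "add_mset x u \<in> set L' \<or> \<phi> (u, x) \<noteq> None" using False L by auto
          then show ?thesis using phi_upd_keep[of \<phi> u x N w t] by blast
        qed
      qed
    qed
  next
    case False
    define L'' where "L'' = fold (\<lambda>x. ins_sorted (err_less ord) (add_mset x w)) (var_list m) L'"
    have step: "algP_step m \<alpha> H ord (L, N, \<phi>) = (L'', insert w N, phi_upd \<phi> N w w)"
      using False by (simp add: algP_step_def L L''_def)
    have setL'': "set L'' = set L' \<union> (\<lambda>x. add_mset x w) ` vars m"
      unfolding L''_def fold_ins_set using var_list_props by metis
    have wM: "w \<in> monomials m" using I1 L by auto
    have wN: "w \<notin> N" using False by auto
    show ?thesis unfolding step algP_inv_def prod.case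
    proof (intro conjI)
      show "set L'' \<subseteq> monomials m" using I1 L wM unfolding setL''
        by (auto simp: monomials_def)
      show "insert w N \<subseteq> monomials m" using I2 wM by auto
      show "inj_on ?xi (insert w N)" using I3 False wN by (force simp: inj_on_insert)
      show "(insert w N = {} \<and> L'' = [{#}]) \<or> {#} \<in> insert w N" using I4 L by auto
      show "\<forall>v\<in>insert w N. v \<noteq> {#} \<longrightarrow> (\<exists>w'\<in>insert w N. \<exists>x\<in>vars m. v = add_mset x w')"
      proof (intro ballI impI)
        fix v assume v: "v \<in> insert w N" "v \<noteq> {#}"
        show "\<exists>w'\<in>insert w N. \<exists>x\<in>vars m. v = add_mset x w'"
        proof (cases "v = w")
          case True
          have "w = {#} \<or> (\<exists>w'\<in>N. \<exists>x\<in>vars m. w = add_mset x w')" using I6 L by simp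
          then show ?thesis using True v(2) by blast
        next
          case False
          then have "v \<in> N" using v(1) by simp
          then obtain w' x where "w' \<in> N" "x \<in> vars m" "v = add_mset x w'" using I5 v(2) by blast
          then show ?thesis by blast
        qed
      qed
      show "\<forall>v\<in>set L''. v = {#} \<or> (\<exists>w'\<in>insert w N. \<exists>x\<in>vars m. v = add_mset x w')"
      proof (intro ballI)
        fix v assume "v \<in> set L''"
        then have "v \<in> set L' \<or> v \<in> (\<lambda>x. add_mset x w) ` vars m" unfolding setL'' by blast
        then show "v = {#} \<or> (\<exists>w'\<in>insert w N. \<exists>x\<in>vars m. v = add_mset x w')"
        proof (elim disjE)
          assume "v \<in> set L'"
          then have "v = {#} \<or> (\<exists>w'\<in>N. \<exists>x\<in>vars m. v = add_mset x w')" using I6 L by simp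
          then show ?thesis by blast
        next
          assume "v \<in> (\<lambda>x. add_mset x w) ` vars m"
          then obtain x where "x \<in> vars m" "v = add_mset x w" by blast
          then show ?thesis by blast
        qed
      qed
      show "\<forall>u x v. phi_upd \<phi> N w w (u, x) = Some v \<longrightarrow> v \<in> insert w N \<and> ?xi v = ?xi (add_mset x u)"
      proof (intro allI impI)
        fix u x v assume "phi_upd \<phi> N w w (u, x) = Some v"
        then have "(x \<in># w \<and> u = w - {#x#} \<and> u \<in> N \<and> v = w) \<or> \<phi> (u, x) = Some v"
          by (rule phi_upd_cases)
        then show "v \<in> insert w N \<and> ?xi v = ?xi (add_mset x u)"
        proof (elim disjE)
          assume "x \<in># w \<and> u = w - {#x#} \<and> u \<in> N \<and> v = w"
          then show ?thesis using wM xiw by auto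
        next
          assume "\<phi> (u, x) = Some v"
          then have "v \<in> N \<and> ?xi v = ?xi (add_mset x u)" using I7 by blast
          then show ?thesis by auto
        qed
      qed
      show "\<forall>u\<in>insert w N. \<forall>x\<in>vars m. add_mset x u \<in> set L'' \<or> phi_upd \<phi> N w w (u, x) \<noteq> None"
      proof (intro ballI)
        fix u and x :: "'n \<times> nat" assume u: "u \<in> insert w N" and x: "x \<in> vars m"
        show "add_mset x u \<in> set L'' \<or> phi_upd \<phi> N w w (u, x) \<noteq> None"
        proof (cases "u = w")
          case True
          then show ?thesis using x unfolding setL'' by auto
        next
          case uw: False
          then have uN: "u \<in> N" using u by simp
          show ?thesis
          proof (cases "add_mset x u = w")
            case True
            then show ?thesis using phi_upd_hit[OF True uN] by simp
          next
            case False
            have "add_mset x u \<in> set L \<or> \<phi> (u, x) \<noteq> None" using I8 uN x by blast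
            then have "add_mset x u \<in> set L' \<or> \<phi> (u, x) \<noteq> None" using False L by auto
            then show ?thesis using phi_upd_keep[of \<phi> u x N w w] unfolding setL'' by blast
          qed
        qed
      qed
    qed
  qed
qed

lemma surj_H:
  fixes H :: "'a::field ^'r::finite^'n::finite"
  assumes "vec.dim {c::'a^'n. c v* H = 0} = k" "CARD('r) = CARD('n) - k"
  shows "surj (\<lambda>c. c v* H)"
proof -
  define f where "f = (\<lambda>c::'a^'n. transpose H *v c)"
  have fe: "f = (\<lambda>c. c v* H)" by (simp add: f_def)
  have lin: "Vector_Spaces.linear (*s) (*s) f" unfolding f_def by (rule matrix_vector_mul_linear_gen)
  interpret lf: Vector_Spaces.linear "(*s) :: 'a \<Rightarrow> 'a^'n \<Rightarrow> _" "(*s) :: 'a \<Rightarrow> 'a^'r \<Rightarrow> _" f by (rule lin)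
  define K where "K = {c. f c = 0}"
  have dK: "vec.dim K = k" using assms(1) by (simp add: K_def fe)
  have kle: "k \<le> CARD('n)" using dK dim_subset_UNIV_cart_gen by metis
  obtain B where B: "B \<subseteq> K" "vec.independent B" "K \<subseteq> vec.span B" "card B = vec.dim K"
    using vec.basis_exists by blast
  obtain C where C: "B \<subseteq> C" "C \<subseteq> UNIV" "vec.independent C" "UNIV \<subseteq> vec.span C"
    by (rule vec.maximal_independent_subset_extend[OF subset_UNIV B(2)])
  have finC: "finite C" using C(3) vec.finiteI_independent by blast
  have cC: "card C = CARD('n)"
    using vec.basis_card_eq_dim[OF subset_UNIV C(4) C(3)] vec_dim_card by simp
  define D where "D = C - B"
  have cD: "card D = CARD('n) - k"
    using cC dK B(4) C(1) finC by (simp add: D_def card_Diff_subset finite_subset)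
  have indD: "vec.independent D" using C(3) vec.independent_mono D_def by blast
  have spUN: "{x + y |x y. x \<in> vec.span B \<and> y \<in> vec.span D} = UNIV"
    using C(1,4) vec.span_Un[of B D, symmetric] by (auto simp: D_def Un_absorb1)
  have "vec.dim {x + y |x y. x \<in> vec.span B \<and> y \<in> vec.span D} + vec.dim (vec.span B \<inter> vec.span D)
        = vec.dim (vec.span B) + vec.dim (vec.span D)"
    by (rule vec.dim_sums_Int) auto
  then have "vec.dim (vec.span B \<inter> vec.span D) = 0"
    using spUN vec_dim_card cD dK B(4) vec.dim_span_eq_card_independent[OF indD]
      vec.dim_span_eq_card_independent[OF B(2)] kle by (simp add: vec.dim_span card_cart_basis)
  then have int0: "vec.span B \<inter> vec.span D \<subseteq> {0}" by simp
  have inj: "inj_on f (vec.span D)"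
  proof (subst lf.inj_on_iff_eq_0)
    show "vec.subspace (vec.span D)" by simp
    show "\<forall>x\<in>vec.span D. f x = 0 \<longrightarrow> x = 0"
      using int0 B(3) K_def by auto
  qed
  have "vec.dim (f ` D) = vec.dim D" by (rule vec.dim_image_eq[OF lin inj])
  then have dfD: "vec.dim (f ` D) = CARD('r)"
    using vec.dim_eq_card_independent[OF indD] cD assms(2) by simp
  have "range f \<subseteq> vec.span (f ` D)"
  proof
    fix y assume "y \<in> range f"
    then obtain x where x: "y = f x" by blast
    have "x \<in> vec.span (B \<union> D)" using C(1,4) by (auto simp: D_def Un_absorb1)
    then obtain b d where bd: "x = b + d" "b \<in> vec.span B" "d \<in> vec.span D"
      using vec.span_Un by blast
    have "vec.span B \<subseteq> K" using vec.span_minimal[OF B(1)] lf.subspace_kernel K_def by simp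
    then have "f b = 0" using bd(2) by (auto simp: K_def)
    then have "y = f d" using x bd by (simp add: lf.add)
    then show "y \<in> vec.span (f ` D)" using bd(3) lf.span_image by auto
  qed
  then have "vec.span (f ` D) = UNIV"
    using vec.dim_eq_full[of "f ` D"] dfD by (simp add: vec.dimension_def card_cart_basis)
  moreover have "f ` vec.span D \<subseteq> range f" by blast
  ultimately have "range f = UNIV" using lf.span_image[of D] by auto
  then show ?thesis using fe by simp
qed



definition algP_mu :: "nat \<Rightarrow> 'a::field \<Rightarrow> 'a ^ 'r ^ 'n \<Rightarrow> ('n::finite, 'a) algP_state \<Rightarrow> nat" where
  "algP_mu m \<alpha> H s = (case s of (L, N, \<phi>) \<Rightarrow>
     (card (vars m :: ('n \<times> nat) set) + 1) * card (UNIV - xi m \<alpha> H ` N) + length L)"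

lemma step_measure:
  fixes H :: "'a::{finite,field} ^ 'r::finite ^ 'n::finite"
  assumes inv: "algP_inv m \<alpha> H (L, N, \<phi>)" and L: "L = w # L'"
  shows "algP_mu m \<alpha> H (algP_step m \<alpha> H ord (L, N, \<phi>)) < algP_mu m \<alpha> H (L, N, \<phi>)"
proof -
  let ?xi = "xi m \<alpha> H"
  let ?V = "card (vars m :: ('n \<times> nat) set)"
  show ?thesis
  proof (cases "\<exists>v\<in>N. ?xi v = ?xi w")
    case True
    define t where "t = (SOME v. v \<in> N \<and> ?xi v = ?xi w)"
    have step: "algP_step m \<alpha> H ord (L, N, \<phi>) = (L', N, phi_upd \<phi> N w t)"
      using True by (simp add: algP_step_def L t_def)
    show ?thesis unfolding step algP_mu_def using L by simp
  next
    case False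
    define L'' where "L'' = fold (\<lambda>x. ins_sorted (err_less ord) (add_mset x w)) (var_list m) L'"
    have step: "algP_step m \<alpha> H ord (L, N, \<phi>) = (L'', insert w N, phi_upd \<phi> N w w)"
      using False by (simp add: algP_step_def L L''_def)
    have lenL'': "length L'' = length L' + ?V"
      unfolding L''_def fold_ins_length length_var_list by simp
    define D where "D = UNIV - ?xi ` N"
    have xD: "?xi w \<in> D" using False unfolding D_def by auto
    have "UNIV - ?xi ` insert w N = D - {?xi w}" unfolding D_def by auto
    then have cD: "card (UNIV - ?xi ` insert w N) = card D - 1" using xD by simp
    have "card D > 0" using xD by (auto simp: card_gt_0_iff)
    then obtain c where c: "card D = Suc c" by (cases "card D") auto
    show ?thesis unfolding step algP_mu_def prod.case cD lenL'' using c L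
      by (simp add: D_def)
  qed
qed

lemma step_inv':
  fixes H :: "'a::field ^ 'r ^ 'n::finite"
  shows "algP_inv m \<alpha> H s \<Longrightarrow> (\<lambda>(L, N, \<phi>). L \<noteq> []) s \<Longrightarrow> algP_inv m \<alpha> H (algP_step m \<alpha> H ord s)"
  by (cases s; cases "fst s") (auto intro: step_inv)

lemma step_measure':
  fixes H :: "'a::{finite,field} ^ 'r::finite ^ 'n::finite"
  shows "algP_inv m \<alpha> H s \<Longrightarrow> (\<lambda>(L, N, \<phi>). L \<noteq> []) s \<Longrightarrow>
    algP_mu m \<alpha> H (algP_step m \<alpha> H ord s) < algP_mu m \<alpha> H s"
  by (cases s; cases "fst s") (auto intro: step_measure)

lemma algP_result:
  fixes H :: "'a::{finite,field} ^ 'r::finite ^ 'n::finite"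
  shows "\<exists>N \<phi>. algP m \<alpha> H ord = Some ([], N, \<phi>) \<and> algP_inv m \<alpha> H ([], N, \<phi>)"
proof -
  let ?b = "\<lambda>(L, N, \<phi>). (L :: ('n \<times> nat) multiset list) \<noteq> []"
  let ?c = "algP_step m \<alpha> H ord"
  let ?P = "algP_inv m \<alpha> H"
  have wf: "wf {(t, s). (?P s \<and> ?b s) \<and> t = ?c s}"
    by (rule wf_subset[OF wf_measure[of "algP_mu m \<alpha> H"]]) (auto simp: step_measure')
  have "\<exists>t. while_option ?b ?c algP_init = Some t"
    by (rule wf_while_option_Some[OF wf]) (auto intro: step_inv' algP_inv_init)
  then obtain t where t: "algP m \<alpha> H ord = Some t" unfolding algP_def by blast
  have "?P t" by (rule while_option_rule[OF step_inv' t[unfolded algP_def] algP_inv_init])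
  moreover have "\<not> ?b t" by (rule while_option_stop[OF t[unfolded algP_def]])
  ultimately show ?thesis using t by (cases t) auto
qed

lemma reach:
  fixes H :: "'a::field ^ 'r ^ 'n::finite"
  assumes e: "{#} \<in> N"
    and cl: "\<forall>w\<in>N. \<forall>x\<in>vars m. \<exists>v. v \<in> N \<and> xi m \<alpha> H v = xi m \<alpha> H (add_mset x w)"
  shows "set_mset w \<subseteq> vars m \<Longrightarrow> xi m \<alpha> H w \<in> xi m \<alpha> H ` N"
proof (induction w)
  case empty
  then show ?case using e by blast
next
  case (add x w)
  then have wN: "xi m \<alpha> H w \<in> xi m \<alpha> H ` N" and x: "x \<in> vars m" by auto
  from wN obtain u where u0: "xi m \<alpha> H w = xi m \<alpha> H u" "u \<in> N" by (rule imageE)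
  then have u: "u \<in> N" "xi m \<alpha> H u = xi m \<alpha> H w" by simp_all
  obtain v where v: "v \<in> N" "xi m \<alpha> H v = xi m \<alpha> H (add_mset x u)" using bspec[OF bspec[OF cl u(1)] x] by blast
  have "xi m \<alpha> H v = xi m \<alpha> H u + xi m \<alpha> H {#x#}" using v(2) xi_add_mset[of m \<alpha> H x u] by (rule trans)
  also have "\<dots> = xi m \<alpha> H w + xi m \<alpha> H {#x#}" using u(2) by (rule arg_cong)
  also have "\<dots> = xi m \<alpha> H (add_mset x w)" using xi_add_mset[of m \<alpha> H x w] by (rule sym)
  finally have "xi m \<alpha> H v = xi m \<alpha> H (add_mset x w)" .
  then show ?case using v(1) by (metis imageI)
qed


theorem theorem1p8:
  fixes p m k :: nat
    and \<alpha> :: "'a::{finite,field}"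
    and H :: "'a ^ 'r::finite ^ 'n::finite"
    and ord :: "('n \<times> nat) multiset \<Rightarrow> ('n \<times> nat) multiset \<Rightarrow> bool"
  assumes "prime p"
    and "CARD('a) = p ^ m"
    and "\<exists>f :: 'a poly. irreducible_over prime_subfield f \<and> degree f = m \<and> poly f \<alpha> = 0"
    and "vec.dim {c :: 'a ^ 'n. c v* H = 0} = k"
    and "CARD('r) = CARD('n) - k"
    and "admissible_order m ord"
  shows "\<exists>L N \<phi>. algP m \<alpha> H ord = Some (L, N, \<phi>) \<and>
           canonical_forms m \<alpha> H N \<and>
           (\<forall>w\<in>N. \<forall>x\<in>vars m. \<exists>v. \<phi> (w, x) = Some v \<and> v \<in> N \<and>
               xi m \<alpha> H v = xi m \<alpha> H (add_mset x w))"
proof -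
  let ?xi = "xi m \<alpha> H"
  obtain f :: "'a poly" where f: "irreducible_over prime_subfield f" "degree f = m" "poly f \<alpha> = 0"
    using assms(3) by blast
  obtain N \<phi> where res: "algP m \<alpha> H ord = Some ([], N, \<phi>)" and inv: "algP_inv m \<alpha> H ([], N, \<phi>)"
    using algP_result by blast
  have I2: "N \<subseteq> monomials m" and I3: "inj_on ?xi N"
    and I4: "(N = {} \<and> ([] :: ('n \<times> nat) multiset list) = [{#}]) \<or> {#} \<in> N"
    and I5: "\<forall>w\<in>N. w \<noteq> {#} \<longrightarrow> (\<exists>w'\<in>N. \<exists>x\<in>vars m. w = add_mset x w')"
    and I7: "\<forall>u x v. \<phi> (u, x) = Some v \<longrightarrow> v \<in> N \<and> ?xi v = ?xi (add_mset x u)"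
    and I8: "\<forall>w\<in>N. \<forall>x\<in>vars m. \<phi> (w, x) \<noteq> None"
    using inv unfolding algP_inv_def by auto
  have e: "{#} \<in> N" using I4 by simp
  have cl: "\<forall>w\<in>N. \<forall>x\<in>vars m. \<exists>v. \<phi> (w, x) = Some v \<and> v \<in> N \<and> ?xi v = ?xi (add_mset x w)"
  proof (intro ballI)
    fix w and x :: "'n \<times> nat" assume w: "w \<in> N" and x: "x \<in> vars m"
    obtain v where v: "\<phi> (w, x) = Some v" using bspec[OF bspec[OF I8 w] x] by blast
    then have "v \<in> N \<and> ?xi v = ?xi (add_mset x w)" using I7 by blast
    then show "\<exists>v. \<phi> (w, x) = Some v \<and> v \<in> N \<and> ?xi v = ?xi (add_mset x w)" using v by blast
  qed
  have cl': "\<forall>w\<in>N. \<forall>x\<in>vars m. \<exists>v. v \<in> N \<and> ?xi v = ?xi (add_mset x w)"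
    using cl by blast
  have span: "\<And>a::'a. \<exists>c. a = (\<Sum>j<m. of_nat (c j) * \<alpha> ^ j)"
    by (rule span_alpha[OF assms(1,2) f])
  have sH: "surj (\<lambda>c::'a ^ 'n. c v* H)" by (rule surj_H[OF assms(4,5)])
  have xiN: "?xi ` N = UNIV"
  proof (intro set_eqI iffI)
    fix s :: "'a ^ 'r"
    obtain c where c: "s = c v* H" using sH by (metis surjD)
    obtain w where w: "w \<in> monomials m" "psi m \<alpha> w = c" using psi_surj[OF span] by blast
    have "?xi w = s" using w c by (simp add: xi_def)
    moreover have "?xi w \<in> ?xi ` N" using reach[OF e cl'] w(1) by (simp add: monomials_def)
    ultimately show "s \<in> ?xi ` N" by simp
  qed simp
  have "card N = CARD('a) ^ CARD('r)"
    using card_image[OF I3] xiN by simp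
  then have "canonical_forms m \<alpha> H N"
    unfolding canonical_forms_def using I2 e I3 I5 by blast
  then show ?thesis using res cl by blast
qed


end
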